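(* Let $y$ be a string. For any $x\in\mathrm{Substr}(y)$, if $x\in\mathcal{R}$ (i.e., $x$ is represented by a black node of $\mathrm{AST}(y)$), then every prefix of $x$ also belongs to $\mathcal{R}$ (i.e., is represented by a black node of $\mathrm{AST}(y)$).
   Context: $\mathrm{Substr}(y)$ is the set of substrings of $y$. $\mathrm{EndPos}(x)=\{i\mid y[i-|x|+1..i]=x\}$; for $x\in\mathrm{Substr}(y)$, $\overleftarrow{x}$ denotes the longest string $z$ with $\mathrm{EndPos}(z)=\mathrm{EndPos}(x)$, and $\mathcal{R}=\{\overleftarrow{x}\mid x\in\mathrm{Substr}(y)\}$. Similarly, with $\mathrm{BegPos}(x)=\{i\mid y[i..i+|x|-1]=x\}$, $\overrightarrow{x}$ is the longest $z$ with $\mathrm{BegPos}(z)=\mathrm{BegPos}(x)$ and $\mathcal{L}=\{\overrightarrow{x}\mid x\in\mathrm{Substr}(y)\}$. $\mathrm{AST}(y)$ is the rooted tree on node set $\mathcal{L}\cup\mathcal{R}$ in which the parent of each non-root node $z$ is its longest proper prefix in $\mathcal{L}\cup\mathcal{R}$ (edge labeled by the remaining suffix); a node is black iff it belongs to $\mathcal{R}$. *)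

theory Defs
  imports Main "HOL-Library.Sublist"
begin

definition Substr :: "'a list \<Rightarrow> 'a list set" where
  "Substr y = {x. \<exists>u v. y = u @ x @ v}"

(* End positions, 1-indexed as in the paper: i such that y[i-|x|+1..i] = x, i.e. the
   first i letters of y end with x.  i ranges over 0..|y| (so EndPos of the empty string
   is {0,...,|y|}). *)
definition EndPos :: "'a list \<Rightarrow> 'a list \<Rightarrow> nat set" where
  "EndPos y x = {i. length x \<le> i \<and> i \<le> length y \<and> drop (i - length x) (take i y) = x}"

definition left_rep :: "'a list \<Rightarrow> 'a list \<Rightarrow> 'a list" where
  "left_rep y x = (THE z. EndPos y z = EndPos y x \<and>
        (\<forall>z'. EndPos y z' = EndPos y x \<longrightarrow> length z' \<le> length z))"

definition Rset :: "'a list \<Rightarrow> 'a list set" where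
  "Rset y = left_rep y ` Substr y"

end

theory Submission
  imports Defs
begin

lemma EndPos_suffix: "i \<in> EndPos y x \<longleftrightarrow> i \<le> length y \<and> suffix x (take i y)"
proof -
  have "(length x \<le> i \<and> drop (i - length x) (take i y) = x) \<longleftrightarrow> suffix x (take i y)"
    if "i \<le> length y" for i
  proof
    assume "length x \<le> i \<and> drop (i - length x) (take i y) = x"
    then show "suffix x (take i y)" by (metis suffix_drop)
  next
    assume "suffix x (take i y)"
    then obtain w where w: "take i y = w @ x" by (auto simp: suffix_def)
    have "length (take i y) = i" using that by simp
    with w show "length x \<le> i \<and> drop (i - length x) (take i y) = x" by auto
  qed
  then show ?thesis unfolding EndPos_def by auto
qed

lemma Substr_EndPos: "x \<in> Substr y \<Longrightarrow> \<exists>i. i \<in> EndPos y x"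
proof -
  assume "x \<in> Substr y"
  then obtain u v where y: "y = u @ x @ v" by (auto simp: Substr_def)
  have "take (length (u@x)) y = u @ x" using y by simp
  then show ?thesis using y
    by (intro exI[of _ "length (u@x)"]) (simp add: EndPos_suffix suffix_def)
qed

lemma EP_len: "i \<in> EndPos y z \<Longrightarrow> length z \<le> i"
  unfolding EndPos_def by auto

lemma suffix_eq_len: "suffix a t \<Longrightarrow> suffix b t \<Longrightarrow> length a = length b \<Longrightarrow> a = b"
  using suffix_length_suffix[of a t b] suffix_length_suffix[of b t a] suffix_order.antisym by simp

lemma EP_eq: "EndPos y z = EndPos y w \<Longrightarrow> i \<in> EndPos y w \<Longrightarrow> length z = length w \<Longrightarrow> z = w"
  by (metis EndPos_suffix suffix_eq_len)

lemma left_rep_props: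
  assumes "w \<in> Substr y"
  shows "EndPos y (left_rep y w) = EndPos y w \<and>
     (\<forall>z'. EndPos y z' = EndPos y w \<longrightarrow> length z' \<le> length (left_rep y w))"
proof -
  obtain i where i: "i \<in> EndPos y w" using Substr_EndPos[OF assms] by blast
  define S where "S = {z. EndPos y z = EndPos y w}"
  have bnd: "length ` S \<subseteq> {..i}"
  proof
    fix k assume "k \<in> length ` S"
    then obtain z where "z \<in> S" "k = length z" by blast
    then have "i \<in> EndPos y z" using i unfolding S_def by simp
    then show "k \<in> {..i}" using EP_len \<open>k = length z\<close> by simp
  qed
  have fin: "finite (length ` S)" using finite_subset[OF bnd finite_atMost] .
  have "w \<in> S" unfolding S_def by simp
  hence ne: "length ` S \<noteq> {}" by blast
  define n where "n = Max (length ` S)"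
  have "n \<in> length ` S" unfolding n_def using fin ne by (rule Max_in)
  then obtain z where z: "z \<in> S" "length z = n" by blast
  have mx: "\<forall>z'. EndPos y z' = EndPos y w \<longrightarrow> length z' \<le> length z"
  proof (intro allI impI)
    fix z' assume "EndPos y z' = EndPos y w"
    hence "z' \<in> S" unfolding S_def by simp
    hence "length z' \<in> length ` S" by (rule imageI)
    thus "length z' \<le> length z" using z(2) Max_ge[OF fin] unfolding n_def by simp
  qed
  have "\<exists>!z. EndPos y z = EndPos y w \<and>
        (\<forall>z'. EndPos y z' = EndPos y w \<longrightarrow> length z' \<le> length z)"
  proof (rule ex1I[of _ z])
    show "EndPos y z = EndPos y w \<and> (\<forall>z'. EndPos y z' = EndPos y w \<longrightarrow> length z' \<le> length z)"
      using z mx unfolding S_def by auto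
  next
    fix u assume u: "EndPos y u = EndPos y w \<and> (\<forall>z'. EndPos y z' = EndPos y w \<longrightarrow> length z' \<le> length u)"
    have zS: "EndPos y z = EndPos y w" using z(1) unfolding S_def by simp
    have "length u \<le> length z" using mx u by blast
    moreover have "length z \<le> length u" using u zS by blast
    ultimately have "length u = length z" by simp
    moreover have "EndPos y u = EndPos y z" using u zS by simp
    moreover have "i \<in> EndPos y z" using zS i by simp
    ultimately show "u = z" using EP_eq by blast
  qed
  then show ?thesis unfolding left_rep_def by (rule theI')
qed

lemma EP_cons_sub: "EndPos y (c#x) \<subseteq> EndPos y x"
proof
  fix i assume "i \<in> EndPos y (c#x)"
  hence "i \<le> length y" "suffix (c#x) (take i y)" unfolding EndPos_suffix by auto
  moreover have "suffix x (c#x)" by (simp add: suffix_def)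
  ultimately show "i \<in> EndPos y x" unfolding EndPos_suffix using suffix_order.trans by blast
qed

lemma Rset_imp: "x \<in> Rset y \<Longrightarrow> EndPos y (c#x) \<noteq> EndPos y x"
proof
  assume "x \<in> Rset y" and e: "EndPos y (c#x) = EndPos y x"
  then obtain w where w: "w \<in> Substr y" "x = left_rep y w" unfolding Rset_def by blast
  have "EndPos y x = EndPos y w" using left_rep_props[OF w(1)] w(2) by simp
  hence "EndPos y (c#x) = EndPos y w" using e by simp
  hence "length (c#x) \<le> length (left_rep y w)" using left_rep_props[OF w(1)] by blast
  hence "length (c#x) \<le> length x" using w(2) by simp
  then show False by simp
qed

lemma Rset_intro:
  assumes x: "x \<in> Substr y" and nc: "\<And>c. EndPos y (c#x) \<noteq> EndPos y x"
  shows "x \<in> Rset y"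
proof -
  obtain i where i: "i \<in> EndPos y x" using Substr_EndPos[OF x] by blast
  let ?z = "left_rep y x"
  have P: "EndPos y ?z = EndPos y x" "\<And>z'. EndPos y z' = EndPos y x \<Longrightarrow> length z' \<le> length ?z"
    using left_rep_props[OF x] by auto
  have "length ?z \<le> length x"
  proof (rule ccontr)
    assume "\<not> length ?z \<le> length x"
    hence lt: "length x < length ?z" by simp
    have iz: "i \<in> EndPos y ?z" using i P(1) by simp
    have s1: "suffix x (take i y)" "suffix ?z (take i y)" using i iz unfolding EndPos_suffix by auto
    have "suffix x ?z" using suffix_length_suffix[OF s1 less_imp_le[OF lt]] .
    then obtain v where v: "?z = v @ x" unfolding suffix_def by blast
    have "v \<noteq> []" using v lt by auto
    then obtain v' c where vc: "v = v' @ [c]" by (cases v rule: rev_exhaust) simp_all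
    have "?z = v' @ (c # x)" using v vc by simp
    hence sz: "suffix (c#x) ?z" unfolding suffix_def by (rule exI)
    have "EndPos y ?z \<subseteq> EndPos y (c#x)"
    proof
      fix k assume "k \<in> EndPos y ?z"
      hence "k \<le> length y" "suffix ?z (take k y)" unfolding EndPos_suffix by auto
      thus "k \<in> EndPos y (c#x)" unfolding EndPos_suffix using sz suffix_order.trans by blast
    qed
    hence "EndPos y x \<subseteq> EndPos y (c#x)" using P(1) by simp
    hence "EndPos y (c#x) = EndPos y x" using EP_cons_sub by (rule subset_antisym[rotated])
    with nc show False by blast
  qed
  hence "length ?z = length x" using P(2)[of x] by simp
  hence "?z = x" using EP_eq[OF P(1) i] by simp
  then have "x = left_rep y x" by simp
  then show ?thesis using x unfolding Rset_def by (rule image_eqI)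
qed

lemma prefix_Substr: "x \<in> Substr y \<Longrightarrow> prefix p x \<Longrightarrow> p \<in> Substr y"
proof -
  assume "x \<in> Substr y" "prefix p x"
  then obtain u v q where "y = u @ x @ v" "x = p @ q" unfolding Substr_def prefix_def by blast
  hence "y = u @ p @ (q @ v)" by simp
  thus ?thesis unfolding Substr_def by blast
qed

theorem lemma4:
  fixes y x :: "'a list"
  assumes "x \<in> Substr y" and "x \<in> Rset y"
  shows "\<forall>p. prefix p x \<longrightarrow> p \<in> Rset y"
proof (intro allI impI)
  fix p assume pp: "prefix p x"
  then obtain q where xq: "x = p @ q" by (auto simp: prefix_def)
  show "p \<in> Rset y"
  proof (rule Rset_intro[OF prefix_Substr[OF assms(1) pp]])
    fix c
    show "EndPos y (c#p) \<noteq> EndPos y p"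
    proof
      assume e: "EndPos y (c#p) = EndPos y p"
      have "EndPos y x \<subseteq> EndPos y (c#x)"
      proof
        fix i assume "i \<in> EndPos y x"
        hence il: "i \<le> length y" and sx: "suffix x (take i y)" unfolding EndPos_suffix by auto
        then obtain w where w: "take i y = w @ p @ q" using xq unfolding suffix_def by blast
        have li: "length (take i y) = i" using il by simp
        define j where "j = i - length q"
        have tj: "take j y = w @ p"
        proof -
          have a: "take j y = take j (take i y)" unfolding j_def by (simp add: min_def)
          have "length (take i y) = length w + length p + length q" using w by simp
          hence "j = length (w @ p)" using li unfolding j_def by simp
          hence "take j (take i y) = w @ p" using w by simp
          with a show ?thesis by simp
        qed
        have "suffix p (take j y)" unfolding tj suffix_def by blast
        moreover have "j \<le> length y" using il unfolding j_def by simp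
        ultimately have "j \<in> EndPos y p" unfolding EndPos_suffix by blast
        hence "j \<in> EndPos y (c#p)" using e by simp
        hence "suffix (c#p) (w @ p)" unfolding EndPos_suffix using tj by simp
        then obtain zs where "w @ p = zs @ c # p" unfolding suffix_def by blast
        hence "w @ p = (zs @ [c]) @ p" by simp
        hence "w = zs @ [c]" by (rule append_same_eq[THEN iffD1])
        hence "take i y = zs @ (c # x)" using w xq by simp
        hence "suffix (c#x) (take i y)" unfolding suffix_def by (rule exI)
        then show "i \<in> EndPos y (c#x)" using il unfolding EndPos_suffix by simp
      qed
      hence "EndPos y (c#x) = EndPos y x" using EP_cons_sub by (rule subset_antisym[rotated])
      with Rset_imp[OF assms(2)] show False by blast
    qed
  qed
qed

end
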